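(* Let $0\le b\le1$, $M>0$ and $0\le\alpha<1$, and let $r_0=r_0(\alpha)$ be the real root in $(0,1)$ of the equation \[M(1-\alpha+\alpha r)=\big((1+M)(1-\alpha)-(2-\alpha)(2b-M)r\big)(1-r)^2.\] Let $\mathcal{F}$ be the class of functions $f\in\mathcal{A}_b$, $f(z)=z+\sum_{n\ge2}a_nz^n$, with $|a_n|\le M$ for all $n\ge3$. Then: (i) every $f\in\mathcal{F}$ satisfies $\left|\frac{zf'(z)}{f(z)}-1\right|\le1-\alpha$ for $|z|\le r_0$; (ii) $r_0(\alpha)$ is the radius of starlikeness of order $\alpha$ of $\mathcal{F}$; (iii) $r_0(1/2)$ is the radius of parabolic starlikeness of $\mathcal{F}$. All results are sharp: the function $f_0(z)=z-2bz^2-\frac{Mz^3}{1-z}=z-2bz^2-M\sum_{n\ge3}z^n$ belongs to $\mathcal{F}$ and satisfies $\left|\frac{zf_0'(z)}{f_0(z)}-1\right|=1-\alpha$ and $\operatorname{Re}\frac{zf_0'(z)}{f_0(z)}=\alpha$ at $z=r_0$.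
   Context: $\mathbb{D}=\{z\in\mathbb{C}:|z|<1\}$. For $0\le b\le1$, $\mathcal{A}_b$ is the class of analytic functions $f$ on $\mathbb{D}$ of the form $f(z)=z+a_2z^2+a_3z^3+\cdots$ with $|a_2|=2b$. For a class $\mathcal{F}$ of analytic functions on $\mathbb{D}$ normalized by $f(0)=0$, $f'(0)=1$, and $0\le\alpha<1$, the radius of starlikeness of order $\alpha$ of $\mathcal{F}$ is the supremum of $r\in(0,1]$ such that every $f\in\mathcal{F}$ satisfies $f(z)\ne0$ for $0<|z|<r$ and $\operatorname{Re}\big(zf'(z)/f(z)\big)>\alpha$ for $|z|<r$ (the quotient being $1$ at $z=0$). The radius of parabolic starlikeness of $\mathcal{F}$ is the supremum of $r\in(0,1]$ such that every $f\in\mathcal{F}$ satisfies $\operatorname{Re}\big(zf'(z)/f(z)\big)>\left|zf'(z)/f(z)-1\right|$ for $|z|<r$. *)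

theory Defs
  imports "HOL-Analysis.Analysis"
begin

definition coeff0 :: "(complex \<Rightarrow> complex) \<Rightarrow> nat \<Rightarrow> complex" where
  "coeff0 f n = (deriv ^^ n) f 0 / of_nat (fact n)"

definition normalized_analytic :: "(complex \<Rightarrow> complex) set" where
  "normalized_analytic = {f. f holomorphic_on ball 0 1 \<and> f 0 = 0 \<and> deriv f 0 = 1}"

definition class_A :: "real \<Rightarrow> (complex \<Rightarrow> complex) set" where
  "class_A b = {f \<in> normalized_analytic. cmod (coeff0 f 2) = 2 * b}"

definition sq :: "(complex \<Rightarrow> complex) \<Rightarrow> complex \<Rightarrow> complex" where
  "sq f z = (if z = 0 then 1 else z * deriv f z / f z)"

definition radius_starlike_order :: "real \<Rightarrow> (complex \<Rightarrow> complex) set \<Rightarrow> real" where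
  "radius_starlike_order \<alpha> F = Sup {r \<in> {0<..1}. \<forall>f\<in>F.
      (\<forall>z. 0 < cmod z \<and> cmod z < r \<longrightarrow> f z \<noteq> 0) \<and>
      (\<forall>z. cmod z < r \<longrightarrow> Re (sq f z) > \<alpha>)}"

definition radius_parabolic :: "(complex \<Rightarrow> complex) set \<Rightarrow> real" where
  "radius_parabolic F = Sup {r \<in> {0<..1}. \<forall>f\<in>F.
      (\<forall>z. cmod z < r \<longrightarrow> Re (sq f z) > cmod (sq f z - 1))}"

end

theory Submission
  imports Defs "HOL-Complex_Analysis.Complex_Analysis"
begin


definition cf0 :: "real \<Rightarrow> real \<Rightarrow> nat \<Rightarrow> real" where
  "cf0 b M n = (if n = 0 then 0 else if n = 1 then 1 else if n = 2 then -2*b else -M)"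

lemma f0_fps:
  "(\<lambda>z::complex. z - 2 * of_real b * z^2 - of_real M * z^3 / (1 - z)) has_fps_expansion
     (fps_X - fps_const (2 * of_real b) * fps_X^2 - (fps_const (of_real M) * fps_X^3) / (1 - fps_X))"
  by (intro has_fps_expansion_diff has_fps_expansion_cmult_left has_fps_expansion_divide'
       has_fps_expansion_fps_X has_fps_expansion_fps_X_power has_fps_expansion_1) auto

lemma inv_one_minus_X: "inverse (1 - fps_X :: complex fps) = Abs_fps (\<lambda>n. 1)"
  by (metis fps_inverse_gp' fps_inverse_idempotent fps_nth_Abs_fps one_neq_zero)

lemma f0_nth:
  "fps_nth (fps_X - fps_const (2 * of_real b) * fps_X^2 - (fps_const (of_real M) * fps_X^3) / (1 - fps_X)) n
   = complex_of_real (cf0 b M n)"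
proof -
  have "(fps_const (of_real M) * fps_X^3) / (1 - fps_X) = fps_const (of_real M) * (fps_X^3 * Abs_fps (\<lambda>n. 1 :: complex))"
    by (subst fps_divide_unit) (auto simp: inv_one_minus_X mult.assoc)
  then show ?thesis
    by (auto simp: cf0_def fps_X_power_mult_nth)
qed

lemma f0_coeff:
  "coeff0 (\<lambda>z::complex. z - 2 * of_real b * z^2 - of_real M * z^3 / (1 - z)) n = complex_of_real (cf0 b M n)"
  unfolding coeff0_def using fps_nth_fps_expansion[OF f0_fps[of b M], of n] f0_nth[of b M n] by simp



lemma ser_f:
  assumes "f holomorphic_on ball 0 1" "norm z < 1"
  shows "(\<lambda>n. coeff0 f n * z^n) sums f z"
  using holomorphic_power_series[OF assms(1), of z] assms(2) by (simp add: coeff0_def)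

lemma ser_df:
  assumes "f holomorphic_on ball 0 1" "norm z < 1"
  shows "(\<lambda>n. of_nat (Suc n) * coeff0 f (Suc n) * z^n) sums deriv f z"
proof -
  have h: "deriv f holomorphic_on ball 0 1"
    using assms(1) by (intro holomorphic_deriv) auto
  have "(\<lambda>n. (deriv ^^ n) (deriv f) 0 / fact n * (z - 0)^n) sums deriv f z"
    using holomorphic_power_series[OF h, of z] assms(2) by simp
  moreover have "(deriv ^^ n) (deriv f) 0 / fact n * (z - 0)^n = of_nat (Suc n) * coeff0 f (Suc n) * z^n" for n
  proof -
    have "(deriv ^^ Suc n) f = (deriv ^^ n) (deriv f)" by (simp only: funpow_Suc_right comp_def)
    moreover have "(of_nat (Suc n) :: complex) \<noteq> 0" by (simp only: of_nat_eq_0_iff)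
    moreover have "(fact n :: complex) \<noteq> 0" by simp
    ultimately show ?thesis
      unfolding coeff0_def by (simp only: fact_Suc of_nat_mult) (simp add: field_simps del: of_nat_Suc)
  qed
  ultimately show ?thesis by simp
qed

lemma ser_N:
  assumes "f holomorphic_on ball 0 1" "norm z < 1" "f 0 = 0"
  shows "(\<lambda>n. (of_nat n - 1) * coeff0 f n * z^n) sums (z * deriv f z - f z)"
proof -
  have "(\<lambda>n. z * (of_nat (Suc n) * coeff0 f (Suc n) * z^n)) sums (z * deriv f z)"
    using sums_mult[OF ser_df[OF assms(1,2)]] by simp
  then have "(\<lambda>n. (\<lambda>m. of_nat m * coeff0 f m * z^m) (Suc n)) sums (z * deriv f z)"
    by (simp add: field_simps)
  then have "(\<lambda>m. of_nat m * coeff0 f m * z^m) sums (z * deriv f z)"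
    by (subst (asm) sums_Suc_iff) simp
  from sums_diff[OF this ser_f[OF assms(1,2)]] show ?thesis
    by (simp add: algebra_simps)
qed

lemma norm_sums_le:
  fixes a :: "nat \<Rightarrow> complex"
  assumes "a sums s" "m sums t" "\<And>n. norm (a n) \<le> m n"
  shows "norm s \<le> t"
proof -
  have sm: "summable m" using assms(2) by (simp add: sums_summable)
  have sn: "summable (\<lambda>n. norm (a n))"
    by (rule summable_comparison_test[OF _ sm]) (use assms(3) in auto)
  have "norm s = norm (suminf a)" using assms(1) by (metis sums_unique)
  also have "\<dots> \<le> (\<Sum>n. norm (a n))" by (rule summable_norm[OF sn])
  also have "\<dots> \<le> suminf m" by (rule suminf_le[OF assms(3) sn sm])
  also have "\<dots> = t" using assms(2) by (metis sums_unique)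
  finally show ?thesis .
qed


definition Dm :: "real \<Rightarrow> real \<Rightarrow> real \<Rightarrow> real" where
  "Dm b M r = 2*b*r^2 + M*r^3/(1-r)"
definition Nm :: "real \<Rightarrow> real \<Rightarrow> real \<Rightarrow> real" where
  "Nm b M r = 2*b*r^2 + M*r^3*(2-r)/(1-r)^2"
definition gg :: "real \<Rightarrow> real \<Rightarrow> real \<Rightarrow> real \<Rightarrow> real" where
  "gg \<alpha> b M r = ((1 + M) * (1 - \<alpha>) - (2 - \<alpha>) * (2 * b - M) * r) * (1 - r)^2 - M * (1 - \<alpha> + \<alpha> * r)"

lemma gg_ident:
  assumes "0 < r" "r < 1"
  shows "(1-\<alpha>)*(r - Dm b M r) - Nm b M r = r * gg \<alpha> b M r / (1-r)^2"
proof -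
  have "1 - r \<noteq> 0" using assms by simp
  then show ?thesis unfolding Dm_def Nm_def gg_def
    apply (simp add: field_simps)
    apply (simp add: algebra_simps power2_eq_square power3_eq_cube power4_eq_xxxx)
    done
qed

lemma gg_pos:
  assumes b: "0 \<le> b" and M: "M > 0" and \<alpha>: "0 \<le> \<alpha>" "\<alpha> < 1"
    and r0: "r0 < 1" and g0: "gg \<alpha> b M r0 = 0" and r: "0 < r" "r < r0"
  shows "gg \<alpha> b M r > 0"
proof -
  define A where "A x = (1-\<alpha>) - 2*b*(2-\<alpha>)*x" for x
  define q where "q x = x^2*(3-\<alpha>-(2-\<alpha>)*x)" for x
  have split: "gg \<alpha> b M x = A x * (1-x)^2 - M * q x" for x
    unfolding gg_def A_def q_def by (simp add: algebra_simps power2_eq_square)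
  have r0p: "0 < r0" using r by linarith
  have "(2-\<alpha>)*r0 < 2-\<alpha>" using r0 \<alpha> by simp
  hence "0 < 3-\<alpha>-(2-\<alpha>)*r0" by linarith
  hence q0: "q r0 > 0" using r0p unfolding q_def by simp
  have "A r0 * (1-r0)^2 = M * q r0" using g0 split[of r0] by simp
  also have "\<dots> > 0" using M q0 by simp
  finally have "A r0 * (1-r0)^2 > 0" .
  hence Ar0: "A r0 > 0" using r0 by (simp add: zero_less_mult_iff)
  have "2*b*(2-\<alpha>)*r \<le> 2*b*(2-\<alpha>)*r0"
    using b \<alpha> r by (intro mult_left_mono) auto
  hence Ar: "A r \<ge> A r0" unfolding A_def by simp
  have sq: "(1-r)^2 > (1-r0)^2" using r r0 by (intro power_strict_mono) auto
  have "A r0 * (1-r0)^2 < A r0 * (1-r)^2" using Ar0 sq by simp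
  also have "\<dots> \<le> A r * (1-r)^2" using Ar by (intro mult_right_mono) auto
  finally have p: "A r0 * (1-r0)^2 < A r * (1-r)^2" .
  have "r0^2+r0*r+r^2 \<le> 3/2*(r0+r)"
  proof -
    have "r0^2 \<le> r0" using r0 r0p by (simp add: power2_eq_square mult_le_cancel_left1)
    moreover have "r^2 \<le> r" using r r0 by (simp add: power2_eq_square mult_le_cancel_left1)
    moreover have "r0*r \<le> (r0+r)/2" proof -
      have "r0*r < r" using r r0 mult_strict_right_mono[of r0 1 r] by simp
      moreover have "r0*r < r0" using r r0 mult_strict_left_mono[of r 1 r0] by simp
      ultimately show ?thesis by (simp add: field_simps)
    qed
    ultimately show ?thesis by argo
  qed
  hence "(2-\<alpha>)*(r0^2+r0*r+r^2) \<le> (2-\<alpha>)*(3/2*(r0+r))" using \<alpha> by (intro mult_left_mono) auto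
  moreover have "0 \<le> \<alpha>*(r0+r)" using \<alpha> r by simp
  ultimately have br: "0 \<le> (3-\<alpha>)*(r0+r) - (2-\<alpha>)*(r0^2+r0*r+r^2)" by (simp add: algebra_simps)
  have "q r0 - q r = (r0 - r) * ((3-\<alpha>)*(r0+r) - (2-\<alpha>)*(r0^2+r0*r+r^2))"
    unfolding q_def by (simp add: algebra_simps power2_eq_square power3_eq_cube)
  also have "\<dots> \<ge> 0" using br r by simp
  finally have "q r \<le> q r0" by simp
  hence "M * q r \<le> M * q r0" using M by simp
  with p show ?thesis using split[of r] split[of r0] g0 by linarith
qed


definition ff0 :: "real \<Rightarrow> real \<Rightarrow> complex \<Rightarrow> complex" where
  "ff0 b M z = z - 2 * of_real b * z^2 - of_real M * z^3 / (1 - z)"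

definition dd :: "real \<Rightarrow> real \<Rightarrow> real \<Rightarrow> real" where
  "dd b M r = 1 - 4*b*r - M*(3*r^2*(1-r) + r^3)/(1-r)^2"

lemma ff0_eq: "(\<lambda>z::complex. z - 2 * of_real b * z^2 - of_real M * z^3 / (1 - z)) = ff0 b M"
  by (simp add: fun_eq_iff ff0_def)

lemma ff0_deriv:
  assumes "z \<noteq> 1"
  shows "(ff0 b M has_field_derivative (1 - 4 * of_real b * z - of_real M * (3*z^2*(1-z) + z^3)/(1-z)^2)) (at z)"
proof -
  have nz: "1 - z \<noteq> 0" using assms by simp
  show ?thesis unfolding ff0_def[abs_def]
    apply (rule derivative_eq_intros | rule refl)+
    using nz apply (simp_all add: field_simps power2_eq_square power3_eq_cube)
    done
qed

lemma ff0_real: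
  assumes "r < 1"
  shows "ff0 b M (of_real r) = of_real (r - Dm b M r)"
    "deriv (ff0 b M) (of_real r) = of_real (dd b M r)"
proof -
  have nz: "1 - r \<noteq> 0" using assms by simp
  show "ff0 b M (of_real r) = of_real (r - Dm b M r)"
    unfolding ff0_def Dm_def by simp
  have "of_real r \<noteq> (1::complex)" using assms by (metis of_real_1 of_real_eq_iff less_irrefl)
  from DERIV_imp_deriv[OF ff0_deriv[OF this]]
  show "deriv (ff0 b M) (of_real r) = of_real (dd b M r)"
    unfolding dd_def by simp
qed

lemma dd_ident:
  assumes "r < 1"
  shows "r * dd b M r - (r - Dm b M r) = - Nm b M r"
proof -
  have "1 - r \<noteq> 0" using assms by simp
  then show ?thesis unfolding dd_def Dm_def Nm_def
    apply (simp add: field_simps)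
    apply (simp add: algebra_simps power2_eq_square power3_eq_cube power4_eq_xxxx)
    done
qed


lemma ff0_holo: "ff0 b M holomorphic_on ball 0 1"
proof -
  have "\<And>z. z \<in> ball 0 1 \<Longrightarrow> 1 - z \<noteq> (0::complex)"
    by (metis dist_0_norm mem_ball norm_one right_minus_eq less_irrefl)
  then show ?thesis unfolding ff0_def[abs_def] by (intro holomorphic_intros) auto
qed

lemma ff0_coeff: "coeff0 (ff0 b M) n = complex_of_real (cf0 b M n)"
  using f0_coeff[of b M n] by (simp add: ff0_eq)

lemma ff0_in:
  assumes "0 \<le> b" "0 \<le> M"
  shows "ff0 b M \<in> {f \<in> class_A b. \<forall>n\<ge>3. cmod (coeff0 f n) \<le> M}"
proof -
  have d: "deriv (ff0 b M) 0 = 1"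
    using ff0_coeff[of b M 1] by (simp add: coeff0_def cf0_def)
  have "ff0 b M 0 = 0" by (simp add: ff0_def)
  moreover have "cmod (coeff0 (ff0 b M) 2) = 2 * b"
    using assms by (simp add: ff0_coeff cf0_def)
  moreover have "\<forall>n\<ge>3. cmod (coeff0 (ff0 b M) n) \<le> M"
    using assms by (auto simp: ff0_coeff cf0_def)
  ultimately show ?thesis using ff0_holo d
    by (simp add: class_A_def normalized_analytic_def)
qed

lemma maj1:
  assumes "0 < r" "r < 1"
  shows "(\<lambda>n. (if n = 1 then r else 0) - cf0 b M n * r^n) sums Dm b M r"
proof -
  have "(\<lambda>n. coeff0 (ff0 b M) n * (of_real r)^n) sums ff0 b M (of_real r)"
    using ser_f[OF ff0_holo, of "of_real r"] assms by simp
  hence "(\<lambda>n. complex_of_real (cf0 b M n * r^n)) sums complex_of_real (r - Dm b M r)"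
    using ff0_real(1)[of r] assms by (simp add: ff0_coeff)
  hence s: "(\<lambda>n. cf0 b M n * r^n) sums (r - Dm b M r)"
    by (simp only: sums_of_real_iff)
  have "(\<lambda>n. if n = 1 then r else 0) sums r"
    using sums_single[of 1 "\<lambda>_. r"] by simp
  from sums_diff[OF this s] show ?thesis by simp
qed

lemma maj2:
  assumes "0 < r" "r < 1"
  shows "(\<lambda>n. - ((real n - 1) * cf0 b M n * r^n)) sums Nm b M r"
proof -
  have "(\<lambda>n. (of_nat n - 1) * coeff0 (ff0 b M) n * (of_real r)^n) sums
          (of_real r * deriv (ff0 b M) (of_real r) - ff0 b M (of_real r))"
    using ser_N[OF ff0_holo, of "of_real r"] assms by (simp add: ff0_def)
  hence "(\<lambda>n. complex_of_real ((real n - 1) * cf0 b M n * r^n)) sums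
          complex_of_real (r * dd b M r - (r - Dm b M r))"
    using ff0_real[of r] assms by (simp add: ff0_coeff)
  hence s: "(\<lambda>n. (real n - 1) * cf0 b M n * r^n) sums (- Nm b M r)"
    using dd_ident[of r b M] assms by (simp only: sums_of_real_iff)
  from sums_minus[OF s] show ?thesis by simp
qed

lemma inF_facts:
  assumes "f \<in> {f \<in> class_A b. \<forall>n\<ge>3. cmod (coeff0 f n) \<le> M}"
  shows "f holomorphic_on ball 0 1" "f 0 = 0" "coeff0 f 0 = 0" "coeff0 f 1 = 1"
    "cmod (coeff0 f 2) = 2 * b" "\<And>n. n \<ge> 3 \<Longrightarrow> cmod (coeff0 f n) \<le> M"
  using assms by (auto simp: class_A_def normalized_analytic_def coeff0_def)

lemma bound1:
  assumes f: "f \<in> {f \<in> class_A b. \<forall>n\<ge>3. cmod (coeff0 f n) \<le> M}"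
    and z: "norm z < 1" "z \<noteq> 0"
  shows "cmod (f z - z) \<le> Dm b M (norm z)"
proof -
  note F = inF_facts[OF f]
  have "(\<lambda>n. coeff0 f n * z^n - (if n = 1 then z else 0)) sums (f z - z)"
    using sums_diff[OF ser_f[OF F(1) z(1)] sums_single[of 1 "\<lambda>_. z"]] by simp
  moreover have "(\<lambda>n. (if n = 1 then norm z else 0) - cf0 b M n * norm z^n) sums Dm b M (norm z)"
    using maj1 z by simp
  moreover have "cmod (coeff0 f n * z^n - (if n = 1 then z else 0)) \<le>
      (if n = 1 then norm z else 0) - cf0 b M n * norm z^n" for n
  proof -
    consider "n = 0" | "n = 1" | "n = 2" | "n \<ge> 3" by linarith
    then show ?thesis
    proof cases
      case 4
      then have "cmod (coeff0 f n) * norm z ^ n \<le> M * norm z ^ n"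
        using F(6) by (intro mult_right_mono) auto
      then show ?thesis using 4 by (simp add: cf0_def norm_mult norm_power)
    qed (use F in \<open>auto simp: cf0_def norm_mult norm_power\<close>)
  qed
  ultimately show ?thesis by (rule norm_sums_le)
qed

lemma bound2:
  assumes f: "f \<in> {f \<in> class_A b. \<forall>n\<ge>3. cmod (coeff0 f n) \<le> M}"
    and z: "norm z < 1" "z \<noteq> 0"
  shows "cmod (z * deriv f z - f z) \<le> Nm b M (norm z)"
proof -
  note F = inF_facts[OF f]
  have "(\<lambda>n. (of_nat n - 1) * coeff0 f n * z^n) sums (z * deriv f z - f z)"
    using ser_N[OF F(1) z(1) F(2)] .
  moreover have "(\<lambda>n. - ((real n - 1) * cf0 b M n * norm z^n)) sums Nm b M (norm z)"
    using maj2 z by simp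
  moreover have "cmod ((of_nat n - 1) * coeff0 f n * z^n) \<le> - ((real n - 1) * cf0 b M n * norm z^n)" for n
  proof -
    consider "n = 0" | "n = 1" | "n = 2" | "n \<ge> 3" by linarith
    then show ?thesis
    proof cases
      case 4
      then have nn: "cmod (of_nat n - 1 :: complex) = real n - 1"
        by (metis of_nat_1 of_nat_diff norm_of_nat le_trans one_le_numeral of_nat_diff of_real_of_nat_eq
                  order_refl) 
      have "(real n - 1) * (cmod (coeff0 f n) * norm z ^ n) \<le> (real n - 1) * (M * norm z ^ n)"
        using F(6) 4 by (intro mult_left_mono mult_right_mono) auto
      then show ?thesis using 4 nn by (simp add: cf0_def norm_mult norm_power)
    next
      case 3
      have "cmod (of_nat n - 1 :: complex) = 1" using 3 by simp
      then show ?thesis using 3 F by (simp add: cf0_def norm_mult norm_power)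
    qed (use F in \<open>auto simp: cf0_def norm_mult norm_power\<close>)
  qed
  ultimately show ?thesis by (rule norm_sums_le)
qed


lemma Nm_pos:
  assumes "0 \<le> b" "0 < M" "0 < r" "r < 1"
  shows "Nm b M r > 0"
proof -
  have "M*r^3*(2-r)/(1-r)^2 > 0" using assms by simp
  moreover have "2*b*r^2 \<ge> 0" using assms by simp
  ultimately show ?thesis unfolding Nm_def by linarith
qed

lemma E_facts:
  assumes b: "0 \<le> b" and M: "M > 0" and \<alpha>: "0 \<le> \<alpha>" "\<alpha> < 1"
    and r0: "r0 < 1" and g0: "gg \<alpha> b M r0 = 0" and r: "0 < r" "r \<le> r0"
  shows "Nm b M r \<le> (1-\<alpha>)*(r - Dm b M r)"
    "r < r0 \<Longrightarrow> Nm b M r < (1-\<alpha>)*(r - Dm b M r)"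
    "r - Dm b M r > 0"
proof -
  have r1: "r < 1" using r r0 by linarith
  have gge: "gg \<alpha> b M r \<ge> 0"
  proof (cases "r = r0")
    case True then show ?thesis using g0 by simp
  next
    case False then show ?thesis using gg_pos[OF b M \<alpha> r0 g0, of r] r by simp
  qed
  have id: "(1-\<alpha>)*(r - Dm b M r) - Nm b M r = r * gg \<alpha> b M r / (1-r)^2"
    using gg_ident[OF r(1) r1] .
  have "r * gg \<alpha> b M r / (1-r)^2 \<ge> 0" using gge r by simp
  then show 1: "Nm b M r \<le> (1-\<alpha>)*(r - Dm b M r)" using id by linarith
  show "r < r0 \<Longrightarrow> Nm b M r < (1-\<alpha>)*(r - Dm b M r)"
  proof -
    assume "r < r0"
    then have "gg \<alpha> b M r > 0" using gg_pos[OF b M \<alpha> r0 g0, of r] r by simp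
    then have "r * gg \<alpha> b M r / (1-r)^2 > 0" using r r1 by simp
    then show ?thesis using id by linarith
  qed
  have "0 < (1-\<alpha>)*(r - Dm b M r)" using 1 Nm_pos[OF b M r(1) r1] by linarith
  then show "r - Dm b M r > 0" using \<alpha> by (simp add: zero_less_mult_iff)
qed

lemma key:
  assumes b: "0 \<le> b" and M: "M > 0" and \<alpha>: "0 \<le> \<alpha>" "\<alpha> < 1"
    and r0: "r0 < 1" and g0: "gg \<alpha> b M r0 = 0"
    and f: "f \<in> {f \<in> class_A b. \<forall>n\<ge>3. cmod (coeff0 f n) \<le> M}"
    and z: "z \<noteq> 0" "cmod z \<le> r0"
  shows "f z \<noteq> 0" "cmod (sq f z - 1) \<le> 1 - \<alpha>" "cmod z < r0 \<Longrightarrow> cmod (sq f z - 1) < 1 - \<alpha>"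
proof -
  define r where "r = cmod z"
  have rp: "0 < r" using z r_def by simp
  have r1: "r < 1" using z r0 r_def by simp
  note E = E_facts[OF b M \<alpha> r0 g0 rp z(2)[folded r_def]]
  have "cmod (f z - (f z - z)) \<le> cmod (f z) + cmod (f z - z)"
    by (rule norm_triangle_ineq4)
  hence "cmod z - cmod (f z - z) \<le> cmod (f z)" by simp
  moreover have "cmod (f z - z) \<le> Dm b M r"
    using bound1[OF f _ z(1)] r1 r_def by simp
  ultimately have fl: "r - Dm b M r \<le> cmod (f z)"
    using r_def by linarith
  hence fpos: "cmod (f z) > 0" using E(3) by linarith
  then show "f z \<noteq> 0" by simp
  have N: "cmod (z * deriv f z - f z) \<le> Nm b M r"
    using bound2[OF f _ z(1)] r1 r_def by simp
  have fnz: "f z \<noteq> 0" using fpos by simp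
  have eq: "sq f z - 1 = (z * deriv f z - f z) / f z"
    using z(1) fnz by (simp add: sq_def diff_divide_distrib)
  have le1: "cmod (sq f z - 1) \<le> Nm b M r / (r - Dm b M r)"
    unfolding eq norm_divide
    by (rule frac_le) (use N fl E(3) Nm_pos[OF b M rp r1] in auto)
  show "cmod (sq f z - 1) \<le> 1 - \<alpha>"
  proof -
    have "Nm b M r / (r - Dm b M r) \<le> 1 - \<alpha>"
      by (subst pos_divide_le_eq[OF E(3)]) (use E(1) in argo)
    then show ?thesis using le1 by linarith
  qed
  show "cmod z < r0 \<Longrightarrow> cmod (sq f z - 1) < 1 - \<alpha>"
  proof -
    assume "cmod z < r0"
    then have "Nm b M r < (1-\<alpha>)*(r - Dm b M r)" using E(2) r_def by simp
    then have "Nm b M r / (r - Dm b M r) < 1 - \<alpha>"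
      by (subst pos_divide_less_eq[OF E(3)]) argo
    then show ?thesis using le1 by linarith
  qed
qed

lemma sharp:
  assumes b: "0 \<le> b" and M: "M > 0" and \<alpha>: "0 \<le> \<alpha>" "\<alpha> < 1"
    and r0: "0 < r0" "r0 < 1" and g0: "gg \<alpha> b M r0 = 0"
  shows "sq (ff0 b M) (of_real r0) = of_real \<alpha>"
proof -
  note E = E_facts[OF b M \<alpha> r0(2) g0 r0(1) order_refl]
  define D where "D = r0 - Dm b M r0"
  define N where "N = Nm b M r0"
  define d where "d = dd b M r0"
  have Dp: "D > 0" using E(3) D_def by simp
  have eqN: "N = (1-\<alpha>)*D"
    using gg_ident[OF r0, of \<alpha> b M] g0 unfolding N_def D_def by simp
  have di: "r0 * d - D = - N"
    using dd_ident[OF r0(2), of b M] unfolding d_def D_def N_def .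
  have "\<alpha> * D = D - (1-\<alpha>)*D" by (simp add: algebra_simps)
  hence h: "r0 * d = \<alpha> * D" using di eqN by linarith
  have q: "r0 * d / D = \<alpha>"
    unfolding h using Dp by simp
  have "sq (ff0 b M) (of_real r0) = of_real r0 * of_real d / of_real D"
    using r0 ff0_real[OF r0(2), of b M] unfolding sq_def d_def D_def by simp
  also have "\<dots> = of_real (r0 * d / D)" by simp
  finally show ?thesis using q by simp
qed


lemma Re_ge: "Re w \<ge> 1 - cmod (w - 1)"
  using abs_Re_le_cmod[of "w - 1"] by simp

lemma sq0: "sq f 0 = 1" by (simp add: sq_def)

theorem theorem2p5:
  fixes b M \<alpha> r0 :: real and F :: "(complex \<Rightarrow> complex) set"
  assumes b: "0 \<le> b" "b \<le> 1" and M: "M > 0" and \<alpha>: "0 \<le> \<alpha>" "\<alpha> < 1"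
    and r0: "0 < r0" "r0 < 1"
    and r0_eq: "M * (1 - \<alpha> + \<alpha> * r0) =
                 ((1 + M) * (1 - \<alpha>) - (2 - \<alpha>) * (2 * b - M) * r0) * (1 - r0)^2"
    and F_def: "F = {f \<in> class_A b. \<forall>n\<ge>3. cmod (coeff0 f n) \<le> M}"
  shows "(\<forall>f\<in>F. \<forall>z. cmod z \<le> r0 \<longrightarrow> cmod (sq f z - 1) \<le> 1 - \<alpha>)
       \<and> radius_starlike_order \<alpha> F = r0
       \<and> (\<forall>r. 0 < r \<and> r < 1 \<and>
             M * (1 - 1/2 + 1/2 * r) =
               ((1 + M) * (1 - 1/2) - (2 - 1/2) * (2 * b - M) * r) * (1 - r)^2
             \<longrightarrow> radius_parabolic F = r)
       \<and> (let f0 = (\<lambda>z::complex. z - 2 * of_real b * z^2 - of_real M * z^3 / (1 - z)) in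
            f0 \<in> F \<and> cmod (sq f0 (of_real r0) - 1) = 1 - \<alpha> \<and> Re (sq f0 (of_real r0)) = \<alpha>)"
proof -
  have g0: "gg \<alpha> b M r0 = 0" using r0_eq unfolding gg_def by simp
  have f0F: "ff0 b M \<in> F" using ff0_in[OF b(1)] M F_def by simp
  have sh: "sq (ff0 b M) (of_real r0) = of_real \<alpha>"
    using sharp[OF b(1) M \<alpha> r0 g0] .
  have P1: "\<forall>f\<in>F. \<forall>z. cmod z \<le> r0 \<longrightarrow> cmod (sq f z - 1) \<le> 1 - \<alpha>"
  proof (intro ballI allI impI)
    fix f z assume f: "f \<in> F" and z: "cmod z \<le> r0"
    show "cmod (sq f z - 1) \<le> 1 - \<alpha>"
    proof (cases "z = 0")
      case True then show ?thesis using \<alpha> by (simp add: sq0)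
    next
      case False then show ?thesis using key(2)[OF b(1) M \<alpha> r0(2) g0 _ False z] f F_def by simp
    qed
  qed
  have P2: "radius_starlike_order \<alpha> F = r0"
    unfolding radius_starlike_order_def
  proof (rule cSup_eq_maximum)
    show "r0 \<in> {r \<in> {0<..1}. \<forall>f\<in>F. (\<forall>z. 0 < cmod z \<and> cmod z < r \<longrightarrow> f z \<noteq> 0) \<and>
             (\<forall>z. cmod z < r \<longrightarrow> \<alpha> < Re (sq f z))}"
    proof (intro CollectI conjI ballI allI impI)
      show "r0 \<in> {0<..1}" using r0 by simp
    next
      fix f z assume f: "f \<in> F" and z: "0 < cmod z \<and> cmod z < r0"
      then show "f z \<noteq> 0" using key(1)[OF b(1) M \<alpha> r0(2) g0, of f z] F_def by auto
    next
      fix f z assume f: "f \<in> F" and z: "cmod z < r0"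
      show "\<alpha> < Re (sq f z)"
      proof (cases "z = 0")
        case True then show ?thesis using \<alpha> by (simp add: sq0)
      next
        case False
        then have "cmod (sq f z - 1) < 1 - \<alpha>"
          using key(3)[OF b(1) M \<alpha> r0(2) g0 _ False] f z F_def by simp
        then show ?thesis using Re_ge[of "sq f z"] by linarith
      qed
    qed
  next
    fix x assume "x \<in> {r \<in> {0<..1}. \<forall>f\<in>F. (\<forall>z. 0 < cmod z \<and> cmod z < r \<longrightarrow> f z \<noteq> 0) \<and>
             (\<forall>z. cmod z < r \<longrightarrow> \<alpha> < Re (sq f z))}"
    then have hx: "\<And>z. cmod z < x \<Longrightarrow> \<alpha> < Re (sq (ff0 b M) z)" using f0F by blast
    show "x \<le> r0"
    proof (rule ccontr)
      assume "\<not> x \<le> r0"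
      then have "cmod (complex_of_real r0) < x" using r0 by simp
      from hx[OF this] show False using sh by simp
    qed
  qed
  have P3: "\<forall>r. 0 < r \<and> r < 1 \<and>
             M * (1 - 1/2 + 1/2 * r) =
               ((1 + M) * (1 - 1/2) - (2 - 1/2) * (2 * b - M) * r) * (1 - r)^2
             \<longrightarrow> radius_parabolic F = r"
  proof (intro allI impI)
    fix r assume hr: "0 < r \<and> r < 1 \<and>
             M * (1 - 1/2 + 1/2 * r) =
               ((1 + M) * (1 - 1/2) - (2 - 1/2) * (2 * b - M) * r) * (1 - r)^2"
    have h\<alpha>: "0 \<le> (1/2::real)" "(1/2::real) < 1" by auto
    have g1: "gg (1/2) b M r = 0" using hr unfolding gg_def by simp
    have r1: "r < 1" "0 < r" using hr by auto
    have sh1: "sq (ff0 b M) (of_real r) = of_real (1/2)"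
      using sharp[OF b(1) M h\<alpha> r1(2) r1(1) g1] .
    show "radius_parabolic F = r"
      unfolding radius_parabolic_def
    proof (rule cSup_eq_maximum)
      show "r \<in> {ra \<in> {0<..1}. \<forall>f\<in>F. \<forall>z. cmod z < ra \<longrightarrow> cmod (sq f z - 1) < Re (sq f z)}"
      proof (intro CollectI conjI ballI allI impI)
        show "r \<in> {0<..1}" using r1 by simp
      next
        fix f z assume f: "f \<in> F" and z: "cmod z < r"
        show "cmod (sq f z - 1) < Re (sq f z)"
        proof (cases "z = 0")
          case True then show ?thesis by (simp add: sq0)
        next
          case False
          then have "cmod (sq f z - 1) < 1 - 1/2"
            using key(3)[OF b(1) M h\<alpha> r1(1) g1 _ False] f z F_def by simp
          then show ?thesis using Re_ge[of "sq f z"] by linarith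
        qed
      qed
    next
      fix x assume "x \<in> {ra \<in> {0<..1}. \<forall>f\<in>F. \<forall>z. cmod z < ra \<longrightarrow> cmod (sq f z - 1) < Re (sq f z)}"
      then have hx: "\<And>z. cmod z < x \<Longrightarrow> cmod (sq (ff0 b M) z - 1) < Re (sq (ff0 b M) z)"
        using f0F by blast
      show "x \<le> r"
      proof (rule ccontr)
        assume "\<not> x \<le> r"
        then have "cmod (complex_of_real r) < x" using r1 by simp
        from hx[OF this] show False using sh1 by simp
      qed
    qed
  qed
  have P4: "let f0 = (\<lambda>z::complex. z - 2 * of_real b * z^2 - of_real M * z^3 / (1 - z)) in
            f0 \<in> F \<and> cmod (sq f0 (of_real r0) - 1) = 1 - \<alpha> \<and> Re (sq f0 (of_real r0)) = \<alpha>"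
  proof -
    have "cmod (complex_of_real \<alpha> - 1) = 1 - \<alpha>"
      using \<alpha> by (metis abs_of_nonneg diff_ge_0_iff_ge less_imp_le norm_minus_commute norm_of_real of_real_1 of_real_diff)
    then show ?thesis unfolding Let_def ff0_eq using f0F sh by simp
  qed
  show ?thesis using P1 P2 P3 P4 by blast
qed

end
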